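(* Let $\mu,\nu$ be atomless, compactly supported probability measures on $\mathbb{R}$, let $\mathcal F=F_\mu-F_\nu$, and let $I=(a,b)$ be a maximal positivity interval of $\mathcal F$, i.e. $\mathcal F(a)=\mathcal F(b)=0$ and $\mathcal F>0$ on $I$. Then there exist nonnegative measures $\rho_1,\rho_2$ on $I$ such that, with $G(x):=\rho_2([x,b))$ and $F(y):=\rho_1((a,y])$ for $x,y\in I$, $$G\cdot\rho_1=\mu\quad\text{and}\quad F\cdot\rho_2=\nu\qquad\text{on }I;$$ moreover $F$ and $G$ are continuous and positive on $(a,b)$, and the measure $\gamma_0:=(\rho_1\otimes\rho_2)\llcorner\{(x,y):y>x\}$ belongs to $\Pi(\mu\llcorner I,\nu\llcorner I)$. Similarly, if $I=(a,b)$ is a maximal negativity interval of $\mathcal F$, there exist nonnegative measures $\rho_1,\rho_2$ on $I$ such that, with $F(y)=\rho_1([y,b))$ and $G(x)=\rho_2((a,x])$, one has $G\cdot\rho_1=\mu$, $F\cdot\rho_2=\nu$ on $I$, $F,G$ continuous and positive on $(a,b)$, and $(\rho_1\otimes\rho_2)\llcorner\{y<x\}\in\Pi(\mu\llcorner I,\nu\llcorner I)$.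
   Context: $F_\rho(x)=\rho((-\infty,x])$ is the cumulative distribution function. $\Pi(\alpha,\beta)$ denotes the set of positive measures on $\mathbb{R}^2$ with first marginal $\alpha$ and second marginal $\beta$. $\mu\llcorner I$ is the restriction of $\mu$ to $I$; $G\cdot\rho_1$ is the measure with density $G$ with respect to $\rho_1$. *)

theory Defs
  imports "HOL-Probability.Probability"
begin

definition cdf_of :: "real measure \<Rightarrow> real \<Rightarrow> real" where
  "cdf_of \<rho> x = measure \<rho> {..x}"

definition atomless :: "real measure \<Rightarrow> bool" where
  "atomless \<rho> \<longleftrightarrow> (\<forall>x. emeasure \<rho> {x} = 0)"

definition compactly_supported :: "real measure \<Rightarrow> bool" where
  "compactly_supported \<rho> \<longleftrightarrow> (\<exists>K. compact K \<and> emeasure \<rho> (UNIV - K) = 0)"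

definition restr :: "'a measure \<Rightarrow> 'a set \<Rightarrow> 'a measure" where
  "restr \<rho> S = density \<rho> (indicator S)"

definition couplings :: "real measure \<Rightarrow> real measure \<Rightarrow> (real \<times> real) measure set" where
  "couplings \<alpha> \<beta> = {\<gamma>. sets \<gamma> = sets (borel \<Otimes>\<^sub>M borel) \<and>
     (\<forall>A\<in>sets borel. emeasure \<gamma> (A \<times> UNIV) = emeasure \<alpha> A) \<and>
     (\<forall>B\<in>sets borel. emeasure \<gamma> (UNIV \<times> B) = emeasure \<beta> B)}"

end

theory Submission
  imports Defs
begin

lemma level_set:
  fixes \<Phi> :: "real \<Rightarrow> real"
  assumes "x \<le> y" "continuous_on {x..y} \<Phi>" "mono_on {x..y} \<Phi>" "\<Phi> x \<le> s" "s \<le> \<Phi> y"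
  shows "\<exists>t1\<in>{x..y}. \<Phi> t1 = s \<and> {t\<in>{x<..y}. \<Phi> t > s} = {t1<..y}"
proof -
  define S where "S = {x..y} \<inter> \<Phi> -` {..s}"
  have cS: "closed S" unfolding S_def
    by (rule continuous_closed_preimage) (use assms in auto)
  have xS: "x \<in> S" using assms unfolding S_def by auto
  have bS: "bdd_above S" unfolding S_def by (auto intro: bdd_aboveI[of _ y])
  define t1 where "t1 = Sup S"
  have t1S: "t1 \<in> S" unfolding t1_def using closed_contains_Sup[OF _ bS cS] xS by blast
  obtain t0 where t0: "x \<le> t0" "t0 \<le> y" "\<Phi> t0 = s"
    using IVT'[of \<Phi> x s y] assms by auto
  have "t0 \<in> S" using t0 unfolding S_def by auto
  hence "t0 \<le> t1" unfolding t1_def using bS by (rule cSup_upper)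
  have t1r: "x \<le> t1" "t1 \<le> y" using t1S unfolding S_def by auto
  have "\<Phi> t0 \<le> \<Phi> t1" using assms(3) t0 t1r \<open>t0 \<le> t1\<close> by (auto intro: mono_onD)
  hence e: "\<Phi> t1 = s" using t1S t0 unfolding S_def by auto
  have "{t\<in>{x<..y}. \<Phi> t > s} = {t1<..y}"
  proof (intro set_eqI iffI)
    fix t assume "t \<in> {t\<in>{x<..y}. \<Phi> t > s}"
    hence t: "x < t" "t \<le> y" "\<Phi> t > s" by auto
    have "t1 < t"
    proof (rule ccontr)
      assume "\<not> t1 < t" hence "t \<le> t1" by simp
      hence "\<Phi> t \<le> \<Phi> t1" using assms(3) t t1r by (auto intro: mono_onD)
      thus False using e t by simp
    qed
    thus "t \<in> {t1<..y}" using t by auto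
  next
    fix t assume t: "t \<in> {t1<..y}"
    hence "x < t" "t \<le> y" using t1r by auto
    moreover have "\<Phi> t > s"
    proof (rule ccontr)
      assume "\<not> \<Phi> t > s"
      hence "t \<in> S" unfolding S_def using \<open>x < t\<close> \<open>t \<le> y\<close> by auto
      hence "t \<le> t1" unfolding t1_def using bS by (rule cSup_upper)
      thus False using t by auto
    qed
    ultimately show "t \<in> {t\<in>{x<..y}. \<Phi> t > s}" by auto
  qed
  thus ?thesis using e t1r by auto
qed

lemma chain_distr:
  fixes m :: "real measure" and \<Phi> :: "real \<Rightarrow> real"
  assumes sm: "sets m = sets borel" and xy: "x \<le> y" and cont: "continuous_on {x..y} \<Phi>"
    and mon: "mono_on {x..y} \<Phi>"
    and em: "\<And>u v. x \<le> u \<Longrightarrow> u \<le> v \<Longrightarrow> v \<le> y \<Longrightarrow> emeasure m {u<..v} = ennreal (\<Phi> v - \<Phi> u)"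
  shows "distr (density m (indicator {x<..y})) borel (\<lambda>t. \<Phi> (max x (min y t)))
           = density lborel (indicator {\<Phi> x<..\<Phi> y})"
proof -
  define \<Psi> where "\<Psi> t = \<Phi> (max x (min y t))" for t
  have cPsi: "continuous_on UNIV \<Psi>" unfolding \<Psi>_def
    by (rule continuous_on_compose2[OF cont]) (auto intro!: continuous_intros simp: xy)
  have mPsi[measurable]: "\<Psi> \<in> borel_measurable borel"
    using cPsi by (rule borel_measurable_continuous_onI)
  have mPsi': "\<Psi> \<in> measurable m borel" using mPsi sm by (simp cong: measurable_cong_sets)
  have Psi_eq: "\<Psi> t = \<Phi> t" if "t \<in> {x..y}" for t using that unfolding \<Psi>_def by auto
  have mxy: "emeasure m {x<..y} = ennreal (\<Phi> y - \<Phi> x)" using em[of x y] xy by simp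
  have Ioc_sets: "{u<..v} \<in> sets m" for u v :: real using sm by simp
  have key: "emeasure (distr (density m (indicator {x<..y})) borel \<Psi>) {s<..}
       = emeasure (density lborel (indicator {\<Phi> x<..\<Phi> y})) {s<..}" for s
  proof -
    have "emeasure (distr (density m (indicator {x<..y})) borel \<Psi>) {s<..}
        = emeasure (density m (indicator {x<..y})) (\<Psi> -` {s<..} \<inter> space m)"
      using mPsi' by (subst emeasure_distr) (auto simp: sm)
    also have "\<dots> = emeasure m ({x<..y} \<inter> (\<Psi> -` {s<..} \<inter> space m))"
      using measurable_sets[OF mPsi', of "{s<..}"] sm by (subst emeasure_restricted) auto
    also have "{x<..y} \<inter> (\<Psi> -` {s<..} \<inter> space m) = {t\<in>{x<..y}. \<Phi> t > s}"
      using sets_eq_imp_space_eq[OF sm] Psi_eq by auto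
    finally have L: "emeasure (distr (density m (indicator {x<..y})) borel \<Psi>) {s<..} =
       emeasure m {t\<in>{x<..y}. \<Phi> t > s}" .
    have R: "emeasure (density lborel (indicator {\<Phi> x<..\<Phi> y})) {s<..}
        = emeasure lborel ({\<Phi> x<..\<Phi> y} \<inter> {s<..})"
      by (subst emeasure_restricted) auto
    have monI: "\<And>u v. x \<le> u \<Longrightarrow> u \<le> v \<Longrightarrow> v \<le> y \<Longrightarrow> \<Phi> u \<le> \<Phi> v"
      using mon by (auto intro: mono_onD)
    have Pxy: "\<Phi> x \<le> \<Phi> y" using monI xy by auto
    show ?thesis
    proof (cases "s < \<Phi> x")
      case True
      have "{t\<in>{x<..y}. \<Phi> t > s} = {x<..y}"
        using True monI[of x] by (force intro: less_le_trans)
      moreover have "{\<Phi> x<..\<Phi> y} \<inter> {s<..} = {\<Phi> x<..\<Phi> y}" using True by auto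
      ultimately show ?thesis using L R mxy Pxy by simp
    next
      case False
      show ?thesis
      proof (cases "s \<le> \<Phi> y")
        case True
        obtain t1 where t1: "t1 \<in> {x..y}" "\<Phi> t1 = s" "{t\<in>{x<..y}. \<Phi> t > s} = {t1<..y}"
          using level_set[OF xy cont mon _ True] False by auto
        have "{\<Phi> x<..\<Phi> y} \<inter> {s<..} = {s<..\<Phi> y}" using False by auto
        thus ?thesis using L R t1 em[of t1 y] True by simp
      next
        case F2: False
        have "{t\<in>{x<..y}. \<Phi> t > s} = {}"
          proof (intro equals0I)
          fix t assume "t \<in> {t\<in>{x<..y}. \<Phi> t > s}"
          thus False using F2 monI[of t y] by auto
        qed
        moreover have "{\<Phi> x<..\<Phi> y} \<inter> {s<..} = {}" using F2 by auto
        ultimately show ?thesis using L R by (simp only:) simp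
      qed
    qed
  qed
  show ?thesis unfolding \<Psi>_def[symmetric]
  proof (rule measure_eqI_lessThan)
    show "sets (distr (density m (indicator {x<..y})) borel \<Psi>) = sets borel" by simp
    show "sets (density lborel (indicator {\<Phi> x<..\<Phi> y})) = sets borel" by simp
    show "emeasure (distr (density m (indicator {x<..y})) borel \<Psi>) {s<..} < \<infinity>" for s
      unfolding key
      by (subst emeasure_restricted, simp, simp)
         (rule le_less_trans[OF emeasure_mono[of _ "{\<Phi> x..\<Phi> y}"]], auto simp: emeasure_lborel_Icc_eq)
  qed (rule key)
qed

lemma chain_nn:
  fixes m :: "real measure" and \<Phi> :: "real \<Rightarrow> real" and h :: "real \<Rightarrow> ennreal"
  assumes sm: "sets m = sets borel" and xy: "x \<le> y" and cont: "continuous_on {x..y} \<Phi>"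
    and mon: "mono_on {x..y} \<Phi>"
    and em: "\<And>u v. x \<le> u \<Longrightarrow> u \<le> v \<Longrightarrow> v \<le> y \<Longrightarrow> emeasure m {u<..v} = ennreal (\<Phi> v - \<Phi> u)"
    and hm[measurable]: "h \<in> borel_measurable borel"
  shows "(\<integral>\<^sup>+t. h (\<Phi> t) * indicator {x<..y} t \<partial>m) = (\<integral>\<^sup>+s. h s * indicator {\<Phi> x<..\<Phi> y} s \<partial>lborel)"
proof -
  define \<Psi> where "\<Psi> t = \<Phi> (max x (min y t))" for t
  have cPsi: "continuous_on UNIV \<Psi>" unfolding \<Psi>_def
    by (rule continuous_on_compose2[OF cont]) (auto intro!: continuous_intros simp: xy)
  have mPsi[measurable]: "\<Psi> \<in> borel_measurable borel"
    using cPsi by (rule borel_measurable_continuous_onI)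
  have mPsi': "\<Psi> \<in> measurable (density m (indicator {x<..y})) borel"
    using mPsi sm by (simp cong: measurable_cong_sets)
  have D: "distr (density m (indicator {x<..y})) borel \<Psi> = density lborel (indicator {\<Phi> x<..\<Phi> y})"
    unfolding \<Psi>_def by (rule chain_distr[OF sm xy cont mon em])
  have "(\<integral>\<^sup>+s. h s * indicator {\<Phi> x<..\<Phi> y} s \<partial>lborel)
      = (\<integral>\<^sup>+s. h s \<partial>density lborel (indicator {\<Phi> x<..\<Phi> y}))"
    by (subst nn_integral_density) (auto simp: mult.commute)
  also have "\<dots> = (\<integral>\<^sup>+s. h s \<partial>distr (density m (indicator {x<..y})) borel \<Psi>)"
    unfolding D ..
  also have "\<dots> = (\<integral>\<^sup>+t. h (\<Psi> t) \<partial>density m (indicator {x<..y}))"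
    by (rule nn_integral_distr[OF mPsi']) simp
  also have "\<dots> = (\<integral>\<^sup>+t. indicator {x<..y} t * h (\<Psi> t) \<partial>m)"
    using sm by (subst nn_integral_density) (auto simp: cong: measurable_cong_sets)
  also have "\<dots> = (\<integral>\<^sup>+t. h (\<Phi> t) * indicator {x<..y} t \<partial>m)"
    by (rule nn_integral_cong) (auto simp: \<Psi>_def indicator_def)
  finally show ?thesis ..
qed

lemma chain_FTC:
  fixes m :: "real measure" and \<Phi> :: "real \<Rightarrow> real" and g H :: "real \<Rightarrow> real"
  assumes sm: "sets m = sets borel" and xy: "x \<le> y" and cont: "continuous_on {x..y} \<Phi>"
    and mon: "mono_on {x..y} \<Phi>"
    and em: "\<And>u v. x \<le> u \<Longrightarrow> u \<le> v \<Longrightarrow> v \<le> y \<Longrightarrow> emeasure m {u<..v} = ennreal (\<Phi> v - \<Phi> u)"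
    and gm[measurable]: "g \<in> borel_measurable borel"
    and der: "\<And>s. s \<in> {\<Phi> x..\<Phi> y} \<Longrightarrow> DERIV H s :> g s"
    and gnn: "\<And>s. s \<in> {\<Phi> x..\<Phi> y} \<Longrightarrow> 0 \<le> g s"
  shows "(\<integral>\<^sup>+t. ennreal (g (\<Phi> t)) * indicator {x<..y} t \<partial>m) = ennreal (H (\<Phi> y) - H (\<Phi> x))"
proof -
  have Pxy: "\<Phi> x \<le> \<Phi> y" using mon xy by (auto intro: mono_onD)
  have "(\<integral>\<^sup>+t. ennreal (g (\<Phi> t)) * indicator {x<..y} t \<partial>m)
     = (\<integral>\<^sup>+s. ennreal (g s) * indicator {\<Phi> x<..\<Phi> y} s \<partial>lborel)"
    by (rule chain_nn[OF sm xy cont mon em]) measurable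
  also have "\<dots> = (\<integral>\<^sup>+s. ennreal (g s) * indicator {\<Phi> x..\<Phi> y} s \<partial>lborel)"
    by (rule nn_integral_cong_AE, rule AE_mp[OF AE_lborel_singleton[of "\<Phi> x"]])
       (auto simp: indicator_def)
  also have "\<dots> = ennreal (H (\<Phi> y) - H (\<Phi> x))"
    by (rule nn_integral_FTC_Icc[OF gm der gnn Pxy])
  finally show ?thesis .
qed

lemma tonelli_step:
  fixes \<sigma> m :: "real measure" and E :: "real \<Rightarrow> real"
  assumes s\<sigma>: "sets \<sigma> = sets borel" and sm: "sets m = sets borel"
    and sf1: "sigma_finite_measure \<sigma>" and sf2: "sigma_finite_measure m"
    and Em[measurable]: "E \<in> borel_measurable borel"
    and rep: "\<And>t. x \<le> t \<Longrightarrow> t \<le> y \<Longrightarrow>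
       ennreal (E t) = ennreal (E y) + (\<integral>\<^sup>+s. ennreal (E s) * indicator {t<..y} s \<partial>m)"
  shows "(\<integral>\<^sup>+t. ennreal (E t) * indicator {x<..y} t \<partial>\<sigma>) =
     ennreal (E y) * emeasure \<sigma> {x<..y} +
     (\<integral>\<^sup>+s. ennreal (E s) * indicator {x<..y} s * emeasure \<sigma> {x<..<s} \<partial>m)"
proof -
  interpret P: pair_sigma_finite \<sigma> m using sf1 sf2 unfolding pair_sigma_finite_def by auto
  define f where "f t s = ennreal (E s) * indicator {p. x < fst p \<and> fst p < snd p \<and> snd p \<le> y} (t, s)" for t s
  have sp: "sets (\<sigma> \<Otimes>\<^sub>M m) = sets (borel \<Otimes>\<^sub>M borel)"
    by (rule sets_pair_measure_cong[OF s\<sigma> sm])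
  have fm: "case_prod f \<in> borel_measurable (\<sigma> \<Otimes>\<^sub>M m)"
  proof -
    have "case_prod f \<in> borel_measurable (borel \<Otimes>\<^sub>M borel)"
      unfolding f_def by measurable
    thus ?thesis using sp by (simp cong: measurable_cong_sets)
  qed
  have inner: "(\<integral>\<^sup>+s. ennreal (E s) * indicator {t<..y} s \<partial>m) * indicator {x<..y} t
      = (\<integral>\<^sup>+s. f t s \<partial>m)" for t
  proof (cases "t \<in> {x<..y}")
    case True
    thus ?thesis unfolding f_def by (auto intro!: nn_integral_cong simp: indicator_def)
  next
    case False
    have "(\<integral>\<^sup>+s. f t s \<partial>m) = (\<integral>\<^sup>+s. 0 \<partial>m)"
      unfolding f_def using False by (intro nn_integral_cong) (auto simp: indicator_def)
    thus ?thesis using False by simp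
  qed
  have m1: "(\<lambda>t. \<integral>\<^sup>+s. f t s \<partial>m) \<in> borel_measurable \<sigma>"
    using P.M2.borel_measurable_nn_integral[OF fm] .
  have "(\<integral>\<^sup>+t. ennreal (E t) * indicator {x<..y} t \<partial>\<sigma>) =
        (\<integral>\<^sup>+t. ennreal (E y) * indicator {x<..y} t + (\<integral>\<^sup>+s. f t s \<partial>m) \<partial>\<sigma>)"
  proof (rule nn_integral_cong)
    fix t
    show "ennreal (E t) * indicator {x<..y} t = ennreal (E y) * indicator {x<..y} t + (\<integral>\<^sup>+s. f t s \<partial>m)"
    proof (cases "t \<in> {x<..y}")
      case True
      thus ?thesis using rep[of t] inner[of t] by (simp add: indicator_def)
    next
      case False
      hence "indicator {x<..y} t = (0::ennreal)" by simp
      hence "(\<integral>\<^sup>+s. f t s \<partial>m) = 0" using inner[of t] by simp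
      thus ?thesis using False by simp
    qed
  qed
  also have "\<dots> = (\<integral>\<^sup>+t. ennreal (E y) * indicator {x<..y} t \<partial>\<sigma>) + (\<integral>\<^sup>+t. (\<integral>\<^sup>+s. f t s \<partial>m) \<partial>\<sigma>)"
    using m1 s\<sigma> by (subst nn_integral_add) (auto cong: measurable_cong_sets)
  also have "(\<integral>\<^sup>+t. ennreal (E y) * indicator {x<..y} t \<partial>\<sigma>) = ennreal (E y) * emeasure \<sigma> {x<..y}"
    using s\<sigma> by (subst nn_integral_cmult_indicator) auto
  also have "(\<integral>\<^sup>+t. (\<integral>\<^sup>+s. f t s \<partial>m) \<partial>\<sigma>) = (\<integral>\<^sup>+s. (\<integral>\<^sup>+t. f t s \<partial>\<sigma>) \<partial>m)"
    using P.Fubini'[OF fm] by simp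
  also have "\<dots> = (\<integral>\<^sup>+s. ennreal (E s) * indicator {x<..y} s * emeasure \<sigma> {x<..<s} \<partial>m)"
  proof (rule nn_integral_cong)
    fix s
    have "(\<integral>\<^sup>+t. f t s \<partial>\<sigma>) = (\<integral>\<^sup>+t. (ennreal (E s) * indicator {x<..y} s) * indicator {x<..<s} t \<partial>\<sigma>)"
      unfolding f_def by (rule nn_integral_cong) (auto simp: indicator_def)
    also have "\<dots> = ennreal (E s) * indicator {x<..y} s * emeasure \<sigma> {x<..<s}"
      using s\<sigma> by (subst nn_integral_cmult_indicator) auto
    finally show "(\<integral>\<^sup>+t. f t s \<partial>\<sigma>) = ennreal (E s) * indicator {x<..y} s * emeasure \<sigma> {x<..<s}" .
  qed
  finally show ?thesis .
qed

lemma coupling_marginals: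
  fixes M1 M2 :: "real measure" and P :: "(real \<times> real) set"
  assumes s1: "sets M1 = sets borel" and s2: "sets M2 = sets borel"
    and sf1: "sigma_finite_measure M1" and sf2: "sigma_finite_measure M2"
    and P: "P \<in> sets (borel \<Otimes>\<^sub>M borel)"
    and m1: "\<And>A. A \<in> sets borel \<Longrightarrow> (\<integral>\<^sup>+x. indicator A x * emeasure M2 {y. (x, y) \<in> P} \<partial>M1) = emeasure \<alpha> A"
    and m2: "\<And>B. B \<in> sets borel \<Longrightarrow> (\<integral>\<^sup>+y. indicator B y * emeasure M1 {x. (x, y) \<in> P} \<partial>M2) = emeasure \<beta> B"
  shows "restr (M1 \<Otimes>\<^sub>M M2) P \<in> couplings \<alpha> \<beta>"
proof -
  interpret Q: pair_sigma_finite M1 M2 using sf1 sf2 unfolding pair_sigma_finite_def by auto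
  have sp: "sets (M1 \<Otimes>\<^sub>M M2) = sets (borel \<Otimes>\<^sub>M borel)"
    by (rule sets_pair_measure_cong[OF s1 s2])
  have P': "P \<in> sets (M1 \<Otimes>\<^sub>M M2)" using P sp by simp
  have em: "emeasure (restr (M1 \<Otimes>\<^sub>M M2) P) X = emeasure (M1 \<Otimes>\<^sub>M M2) (P \<inter> X)"
    if "X \<in> sets (borel \<Otimes>\<^sub>M borel)" for X
    unfolding restr_def using that sp P' by (subst emeasure_restricted) auto
  show ?thesis unfolding couplings_def
  proof (intro CollectI conjI ballI)
    show "sets (restr (M1 \<Otimes>\<^sub>M M2) P) = sets (borel \<Otimes>\<^sub>M borel)"
      unfolding restr_def using sp by simp
  next
    fix A :: "real set" assume A: "A \<in> sets borel"
    have AX: "A \<times> UNIV \<in> sets (borel \<Otimes>\<^sub>M borel)" using A by auto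
    have "emeasure (M1 \<Otimes>\<^sub>M M2) (P \<inter> A \<times> UNIV) = (\<integral>\<^sup>+x. emeasure M2 (Pair x -` (P \<inter> A \<times> UNIV)) \<partial>M1)"
      using AX P sp by (subst Q.M2.emeasure_pair_measure_alt) auto
    also have "\<dots> = (\<integral>\<^sup>+x. indicator A x * emeasure M2 {y. (x, y) \<in> P} \<partial>M1)"
      by (rule nn_integral_cong) (auto simp: indicator_def vimage_def)
    finally show "emeasure (restr (M1 \<Otimes>\<^sub>M M2) P) (A \<times> UNIV) = emeasure \<alpha> A"
      using em[OF AX] m1[OF A] by simp
  next
    fix B :: "real set" assume B: "B \<in> sets borel"
    have BX: "UNIV \<times> B \<in> sets (borel \<Otimes>\<^sub>M borel)" using B by auto
    have "emeasure (M1 \<Otimes>\<^sub>M M2) (P \<inter> UNIV \<times> B) = (\<integral>\<^sup>+y. emeasure M1 ((\<lambda>x. (x, y)) -` (P \<inter> UNIV \<times> B)) \<partial>M2)"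
      using BX P sp by (subst Q.emeasure_pair_measure_alt2) auto
    also have "\<dots> = (\<integral>\<^sup>+y. indicator B y * emeasure M1 {x. (x, y) \<in> P} \<partial>M2)"
      by (rule nn_integral_cong) (auto simp: indicator_def vimage_def)
    finally show "emeasure (restr (M1 \<Otimes>\<^sub>M M2) P) (UNIV \<times> B) = emeasure \<beta> B"
      using em[OF BX] m2[OF B] by simp
  qed
qed

lemma cdf_facts:
  assumes p: "prob_space M" and s: "sets M = sets borel" and at: "atomless M"
  shows cdf_cont: "continuous_on UNIV (cdf_of M)"
    and cdf_Ioc: "\<And>u v. u \<le> v \<Longrightarrow> measure M {u<..v} = cdf_of M v - cdf_of M u"
    and cdf_Ioo: "\<And>u v. u \<le> v \<Longrightarrow> measure M {u<..<v} = cdf_of M v - cdf_of M u"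
    and cdf_mono: "\<And>u v. u \<le> v \<Longrightarrow> cdf_of M u \<le> cdf_of M v"
    and cdf_em: "\<And>A. emeasure M A = ennreal (measure M A)"
    and cdf_pt: "\<And>x. measure M {x} = 0"
proof -
  interpret real_distribution M using p s by (simp add: real_distribution_def real_distribution_axioms_def)
  have pt: "measure M {x} = 0" for x using at unfolding atomless_def by (simp add: measure_def)
  thus "measure M {x} = 0" for x .
  have cdfeq: "cdf_of M = cdf M" by (auto simp: cdf_of_def cdf_def2 fun_eq_iff)
  show "continuous_on UNIV (cdf_of M)" unfolding cdfeq
    by (intro continuous_at_imp_continuous_on ballI) (simp add: isCont_cdf pt)
  show Ioc: "measure M {u<..v} = cdf_of M v - cdf_of M u" if "u \<le> v" for u v
  proof -
    have "{u<..v} = {..v} - {..u}" by auto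
    thus ?thesis using that by (simp add: finite_measure_Diff cdf_of_def)
  qed
  show "measure M {u<..<v} = cdf_of M v - cdf_of M u" if "u \<le> v" for u v
  proof (cases "u = v")
    case True thus ?thesis by simp
  next
    case False
    have "{u<..<v} = {u<..v} - {v}" using False that by auto
    thus ?thesis using False that Ioc[OF that] pt[of v] by (simp add: finite_measure_Diff)
  qed
  show "u \<le> v \<Longrightarrow> cdf_of M u \<le> cdf_of M v" for u v
    unfolding cdf_of_def by (intro finite_measure_mono) auto
  show "emeasure M A = ennreal (measure M A)" for A by (rule emeasure_eq_measure)
qed

locale core =
  fixes \<mu> \<nu> :: "real measure" and a b :: real
  assumes p\<mu>: "prob_space \<mu>" and p\<nu>: "prob_space \<nu>"
    and s\<mu>: "sets \<mu> = sets borel" and s\<nu>: "sets \<nu> = sets borel"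
    and at\<mu>: "atomless \<mu>" and at\<nu>: "atomless \<nu>" and ab: "a < b"
    and Fa: "cdf_of \<mu> a - cdf_of \<nu> a = 0" and Fb: "cdf_of \<mu> b - cdf_of \<nu> b = 0"
    and pos: "\<forall>x\<in>{a<..<b}. cdf_of \<mu> x - cdf_of \<nu> x > 0"
begin

definition FF where "FF x = cdf_of \<mu> x - cdf_of \<nu> x"

lemmas mu = cdf_facts[OF p\<mu> s\<mu> at\<mu>]
lemmas nu = cdf_facts[OF p\<nu> s\<nu> at\<nu>]

lemma FF_cont: "continuous_on UNIV FF"
  unfolding FF_def[abs_def] by (intro continuous_on_diff mu(1) nu(1))

lemma FF_contI[continuous_intros]: "continuous_on S FF"
  using FF_cont by (rule continuous_on_subset) simp

lemma FF_pos: "t \<in> {a<..<b} \<Longrightarrow> FF t > 0"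
  using pos by (simp add: FF_def)

lemma FF_a: "FF a = 0" and FF_b: "FF b = 0" using Fa Fb by (simp_all add: FF_def)

lemma FF_diff: "u \<le> v \<Longrightarrow> FF v - FF u = measure \<mu> {u<..v} - measure \<nu> {u<..v}"
  by (simp add: FF_def mu(2) nu(2))

lemma FF_le_tau: "t \<in> {a<..<b} \<Longrightarrow> FF t \<le> measure \<mu> {a<..t}"
  using FF_diff[of a t] FF_a measure_nonneg[of \<nu> "{a<..t}"] by simp

lemma FF_lower: 
  assumes "a < p" "p \<le> q" "q < b"
  shows "\<exists>\<delta>>0. \<forall>t\<in>{p..q}. \<delta> \<le> FF t"
proof -
  obtain x0 where x0: "x0 \<in> {p..q}" "\<forall>t\<in>{p..q}. FF x0 \<le> FF t"
    using continuous_attains_inf[of "{p..q}" FF, OF compact_Icc _ FF_contI] assms by auto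
  have "FF x0 > 0" using x0 assms by (intro FF_pos) auto
  thus ?thesis using x0 by blast
qed

definition w where "w t = indicator {a<..<b} t * inverse (FF t)"

lemma w_meas[measurable]: "w \<in> borel_measurable borel"
proof -
  have "continuous_on {a<..<b} (\<lambda>t. inverse (FF t))"
    using FF_pos by (intro continuous_intros) force+
  hence "(\<lambda>t. indicator {a<..<b} t *\<^sub>R inverse (FF t)) \<in> borel_measurable borel"
    by (intro borel_measurable_continuous_on_indicator) auto
  thus ?thesis unfolding w_def[abs_def] by simp
qed

lemma w_nn: "0 \<le> w t"
  unfolding w_def using FF_pos[of t] by (auto simp: indicator_def)

definition m where "m = density \<mu> (\<lambda>t. ennreal (w t))"

lemma sets_m[simp, measurable_cong]: "sets m = sets borel" unfolding m_def by (simp add: s\<mu>)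

lemma w_meas'[measurable]: "(\<lambda>t. ennreal (w t)) \<in> borel_measurable \<mu>"
  using s\<mu> by (simp cong: measurable_cong_sets)

lemma em_m: "A \<in> sets borel \<Longrightarrow> emeasure m A = (\<integral>\<^sup>+t. ennreal (w t) * indicator A t \<partial>\<mu>)"
  unfolding m_def by (subst emeasure_density) (auto simp: s\<mu>)

lemma m_bound:
  assumes "a < p" "p \<le> u" "u \<le> v" "v \<le> q" "q < b" "\<delta> > 0" "\<forall>t\<in>{p..q}. \<delta> \<le> FF t"
  shows "emeasure m {u<..v} \<le> ennreal ((cdf_of \<mu> v - cdf_of \<mu> u) / \<delta>)"
proof -
  have "emeasure m {u<..v} = (\<integral>\<^sup>+t. ennreal (w t) * indicator {u<..v} t \<partial>\<mu>)" by (simp add: em_m)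
  also have "\<dots> \<le> (\<integral>\<^sup>+t. ennreal (inverse \<delta>) * indicator {u<..v} t \<partial>\<mu>)"
  proof (intro nn_integral_mono)
    fix t
    show "ennreal (w t) * indicator {u<..v} t \<le> ennreal (inverse \<delta>) * indicator {u<..v} t"
    proof (cases "t \<in> {u<..v}")
      case True
      hence tI: "t \<in> {a<..<b}" and tpq: "t \<in> {p..q}" using assms by auto
      have "\<delta> \<le> FF t" using assms(7) tpq by auto
      hence "inverse (FF t) \<le> inverse \<delta>" using assms(6) by (intro le_imp_inverse_le) auto
      thus ?thesis using True tI by (simp add: w_def indicator_def ennreal_leI)
    qed simp
  qed
  also have "\<dots> = ennreal (inverse \<delta>) * emeasure \<mu> {u<..v}"
    using s\<mu> by (subst nn_integral_cmult_indicator) auto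
  also have "\<dots> = ennreal ((cdf_of \<mu> v - cdf_of \<mu> u) / \<delta>)"
    using assms mu(2)[of u v] mu(5)[of "{u<..v}"] measure_nonneg[of \<mu> "{u<..v}"]
    by (simp add: ennreal_mult'[symmetric] divide_inverse mult.commute)
  finally show ?thesis .
qed

lemma m_fin: "a < u \<Longrightarrow> u \<le> v \<Longrightarrow> v < b \<Longrightarrow> emeasure m {u<..v} < \<infinity>"
  using FF_lower[of u v] m_bound[of u u v v] by (auto simp: less_top[symmetric] top_unique)

definition mm where "mm u v = measure m {u<..v}"

lemma mm_em: "a < u \<Longrightarrow> u \<le> v \<Longrightarrow> v < b \<Longrightarrow> emeasure m {u<..v} = ennreal (mm u v)"
  unfolding mm_def using m_fin[of u v] by (intro emeasure_eq_ennreal_measure) auto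

lemma mm_add: "a < u \<Longrightarrow> u \<le> v \<Longrightarrow> v \<le> x \<Longrightarrow> x < b \<Longrightarrow> mm u x = mm u v + mm v x"
proof -
  assume h: "a < u" "u \<le> v" "v \<le> x" "x < b"
  have "{u<..x} = {u<..v} \<union> {v<..x}" using h by auto
  moreover have "measure m ({u<..v} \<union> {v<..x}) = measure m {u<..v} + measure m {v<..x}"
    using h m_fin[of u v] m_fin[of v x] by (intro measure_Union) auto
  ultimately show ?thesis unfolding mm_def by simp
qed

lemma mm_nn: "0 \<le> mm u v" unfolding mm_def by simp

definition c where "c = (a + b) / 2"
lemma cI: "a < c" "c < b" using ab unfolding c_def by auto

definition \<Phi> where "\<Phi> y = (if c \<le> y then mm c y else - mm y c)"

lemma Phi_diff: "a < u \<Longrightarrow> u \<le> v \<Longrightarrow> v < b \<Longrightarrow> \<Phi> v - \<Phi> u = mm u v"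
  unfolding \<Phi>_def using cI mm_add[of c u v] mm_add[of u c v] mm_add[of u v c] by auto

lemma em_Phi: "a < u \<Longrightarrow> u \<le> v \<Longrightarrow> v < b \<Longrightarrow> emeasure m {u<..v} = ennreal (\<Phi> v - \<Phi> u)"
  using mm_em Phi_diff by simp

lemma Phi_mono: "a < u \<Longrightarrow> u \<le> v \<Longrightarrow> v < b \<Longrightarrow> \<Phi> u \<le> \<Phi> v"
  using Phi_diff[of u v] mm_nn[of u v] by simp

lemma Phi_mono_on: "a < x \<Longrightarrow> y < b \<Longrightarrow> mono_on {x..y} \<Phi>"
  by (intro mono_onI Phi_mono) auto

lemma Phi_isCont: assumes y: "y \<in> {a<..<b}" shows "isCont \<Phi> y"
proof -
  define p where "p = (a + y) / 2"
  define q where "q = (y + b) / 2"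
  have pq: "a < p" "p < y" "y < q" "q < b" using y unfolding p_def q_def by auto
  obtain \<delta> where d: "\<delta> > 0" "\<forall>t\<in>{p..q}. \<delta> \<le> FF t" using FF_lower[of p q] pq by auto
  have bnd: "\<bar>\<Phi> t - \<Phi> y\<bar> \<le> \<bar>cdf_of \<mu> t - cdf_of \<mu> y\<bar> / \<delta>" if t: "t \<in> {p<..<q}" for t
  proof (cases "y \<le> t")
    case True
    have "ennreal (\<Phi> t - \<Phi> y) \<le> ennreal ((cdf_of \<mu> t - cdf_of \<mu> y) / \<delta>)"
      using em_Phi[of y t] m_bound[of p y t q \<delta>] pq d t True by auto
    hence "\<Phi> t - \<Phi> y \<le> (cdf_of \<mu> t - cdf_of \<mu> y) / \<delta>"
      using d mu(4)[OF True] by (subst (asm) ennreal_le_iff) auto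
    thus ?thesis using Phi_mono[of y t] mu(4)[OF True] pq t True by auto
  next
    case False
    have "ennreal (\<Phi> y - \<Phi> t) \<le> ennreal ((cdf_of \<mu> y - cdf_of \<mu> t) / \<delta>)"
      using em_Phi[of t y] m_bound[of p t y q \<delta>] pq d t False by auto
    hence "\<Phi> y - \<Phi> t \<le> (cdf_of \<mu> y - cdf_of \<mu> t) / \<delta>"
      using d mu(4)[of t y] False by (subst (asm) ennreal_le_iff) auto
    thus ?thesis using Phi_mono[of t y] mu(4)[of t y] pq t False by auto
  qed
  have cc: "isCont (cdf_of \<mu>) y" using mu(1) by (simp add: continuous_on_eq_continuous_at)
  have "((\<lambda>t. \<bar>cdf_of \<mu> t - cdf_of \<mu> y\<bar> / \<delta>) \<longlongrightarrow> \<bar>cdf_of \<mu> y - cdf_of \<mu> y\<bar> / \<delta>) (at y)"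
    using cc d(1) by (intro tendsto_intros) (simp_all add: isCont_def)
  hence lim0: "((\<lambda>t. \<bar>cdf_of \<mu> t - cdf_of \<mu> y\<bar> / \<delta>) \<longlongrightarrow> 0) (at y)" by simp
  have ev: "eventually (\<lambda>t. t \<in> {p<..<q}) (at y)"
    using pq by (intro eventually_at_in_open') auto
  have "((\<lambda>t. \<Phi> t - \<Phi> y) \<longlongrightarrow> 0) (at y)"
    by (rule Lim_null_comparison[OF _ lim0]) (use ev bnd in \<open>auto elim!: eventually_mono\<close>)
  hence "(\<Phi> \<longlongrightarrow> \<Phi> y) (at y)" by (simp add: LIM_zero_iff)
  thus ?thesis by (simp add: isCont_def)
qed

lemma Phi_cont: "continuous_on {a<..<b} \<Phi>"
  using Phi_isCont by (intro continuous_at_imp_continuous_on) auto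

lemma Phi_contI[continuous_intros]: "S \<subseteq> {a<..<b} \<Longrightarrow> continuous_on S \<Phi>"
  using Phi_cont continuous_on_subset by blast

definition f1 where "f1 t = indicator {a<..<b} t * (exp (\<Phi> t) * inverse (FF t))"
definition e1 where "e1 t = indicator {a<..<b} t * exp (\<Phi> t)"
definition f2 where "f2 t = indicator {a<..<b} t * exp (- \<Phi> t)"

lemma f1_meas[measurable]: "f1 \<in> borel_measurable borel"
proof -
  have "continuous_on {a<..<b} (\<lambda>t. exp (\<Phi> t) * inverse (FF t))"
    using FF_pos by (intro continuous_intros) force+
  hence "(\<lambda>t. indicator {a<..<b} t *\<^sub>R (exp (\<Phi> t) * inverse (FF t))) \<in> borel_measurable borel"
    by (intro borel_measurable_continuous_on_indicator) auto
  thus ?thesis unfolding f1_def[abs_def] by simp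
qed

lemma e1_meas[measurable]: "e1 \<in> borel_measurable borel"
proof -
  have "continuous_on {a<..<b} (\<lambda>t. exp (\<Phi> t))" by (intro continuous_intros) auto
  hence "(\<lambda>t. indicator {a<..<b} t *\<^sub>R (exp (\<Phi> t))) \<in> borel_measurable borel"
    by (intro borel_measurable_continuous_on_indicator) auto
  thus ?thesis unfolding e1_def[abs_def] by simp
qed

lemma f2_meas[measurable]: "f2 \<in> borel_measurable borel"
proof -
  have "continuous_on {a<..<b} (\<lambda>t. exp (- \<Phi> t))" by (intro continuous_intros) auto
  hence "(\<lambda>t. indicator {a<..<b} t *\<^sub>R (exp (- \<Phi> t))) \<in> borel_measurable borel"
    by (intro borel_measurable_continuous_on_indicator) auto
  thus ?thesis unfolding f2_def[abs_def] by simp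
qed

lemma FF_meas[measurable]: "FF \<in> borel_measurable borel"
  using FF_cont by (rule borel_measurable_continuous_onI)

lemma f1_nn: "0 \<le> f1 t" unfolding f1_def using FF_pos[of t] by (auto simp: indicator_def)
lemma f2_nn: "0 \<le> f2 t" unfolding f2_def by (auto simp: indicator_def)
lemma e1_nn: "0 \<le> e1 t" unfolding e1_def by (auto simp: indicator_def)

definition \<rho>1 where "\<rho>1 = density \<mu> (\<lambda>t. ennreal (f1 t))"
definition \<rho>2 where "\<rho>2 = density \<nu> (\<lambda>t. ennreal (f2 t))"

lemma sets_rho[simp, measurable_cong]: "sets \<rho>1 = sets borel" "sets \<rho>2 = sets borel"
  unfolding \<rho>1_def \<rho>2_def by (simp_all add: s\<mu> s\<nu>)

lemma em_rho1: "A \<in> sets borel \<Longrightarrow> emeasure \<rho>1 A = (\<integral>\<^sup>+t. ennreal (f1 t) * indicator A t \<partial>\<mu>)"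
  unfolding \<rho>1_def by (subst emeasure_density) (auto simp: s\<mu> cong: measurable_cong_sets)

lemma em_rho2: "A \<in> sets borel \<Longrightarrow> emeasure \<rho>2 A = (\<integral>\<^sup>+t. ennreal (f2 t) * indicator A t \<partial>\<nu>)"
  unfolding \<rho>2_def by (subst emeasure_density) (auto simp: s\<nu> cong: measurable_cong_sets)

lemma int_m: "g \<in> borel_measurable borel \<Longrightarrow> (\<integral>\<^sup>+t. g t \<partial>m) = (\<integral>\<^sup>+t. ennreal (w t) * g t \<partial>\<mu>)"
  unfolding m_def by (subst nn_integral_density) (auto simp: s\<mu> cong: measurable_cong_sets)

lemma rho1_Ioc:
  assumes "a < x" "x \<le> y" "y < b"
  shows "emeasure \<rho>1 {x<..y} = ennreal (exp (\<Phi> y) - exp (\<Phi> x))"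
proof -
  have "(\<integral>\<^sup>+t. ennreal (exp (\<Phi> t)) * indicator {x<..y} t \<partial>m) = ennreal (exp (\<Phi> y) - exp (\<Phi> x))"
    using assms
    by (intro chain_FTC[where g=exp]) (auto intro!: continuous_intros Phi_mono_on em_Phi derivative_eq_intros)
  also have "(\<integral>\<^sup>+t. ennreal (exp (\<Phi> t)) * indicator {x<..y} t \<partial>m) = (\<integral>\<^sup>+t. ennreal (e1 t) * indicator {x<..y} t \<partial>m)"
    using assms by (intro nn_integral_cong) (auto simp: e1_def indicator_def)
  also have "\<dots> = (\<integral>\<^sup>+t. ennreal (w t) * (ennreal (e1 t) * indicator {x<..y} t) \<partial>\<mu>)"
    by (rule int_m) measurable
  also have "\<dots> = (\<integral>\<^sup>+t. ennreal (f1 t) * indicator {x<..y} t \<partial>\<mu>)"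
    by (intro nn_integral_cong) (auto simp: e1_def f1_def w_def indicator_def ennreal_mult''[symmetric] mult_ac)
  finally show ?thesis by (simp add: em_rho1)
qed

definition \<tau> where "\<tau> t = cdf_of \<mu> t - cdf_of \<mu> a"

lemma tau_meas: "t \<ge> a \<Longrightarrow> \<tau> t = measure \<mu> {a<..t}"
  unfolding \<tau>_def using mu(2) by simp

lemma tau_pos: "t \<in> {a<..<b} \<Longrightarrow> FF t \<le> \<tau> t \<and> 0 < \<tau> t"
  using FF_le_tau[of t] FF_pos[of t] tau_meas[of t] by auto

lemma tau_cont: "continuous_on S \<tau>"
  unfolding \<tau>_def[abs_def] using mu(1) by (intro continuous_intros) (auto intro: continuous_on_subset)

lemma tau_bound:
  assumes "a < x" "x \<le> y" "y < b"
  shows "exp (\<Phi> x) * \<tau> y \<le> exp (\<Phi> y) * \<tau> x"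
proof -
  have tx: "0 < \<tau> x" "0 < \<tau> y" using tau_pos[of x] tau_pos[of y] assms by auto
  have "\<tau> x \<le> \<tau> y" unfolding \<tau>_def using mu(4)[OF assms(2)] by simp
  have eq: "(\<integral>\<^sup>+t. ennreal (inverse (\<tau> t)) * indicator {x<..y} t \<partial>\<mu>) = ennreal (ln (\<tau> y) - ln (\<tau> x))"
  proof (rule chain_FTC[where g=inverse and H=ln])
    show "sets \<mu> = sets borel" by (rule s\<mu>)
    show "x \<le> y" by fact
    show "continuous_on {x..y} \<tau>" by (rule tau_cont)
    show "mono_on {x..y} \<tau>" unfolding \<tau>_def by (intro mono_onI) (auto intro: mu(4))
    show "emeasure \<mu> {u<..v} = ennreal (\<tau> v - \<tau> u)" if "u \<le> v" for u v
      using that mu(2)[of u v] mu(5) by (simp add: \<tau>_def)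
    show "inverse \<in> borel_measurable (borel :: real measure)" by measurable
    show "DERIV ln s :> inverse s" if "s \<in> {\<tau> x..\<tau> y}" for s
      using that tx by (auto intro!: derivative_eq_intros simp: field_simps)
    show "0 \<le> inverse s" if "s \<in> {\<tau> x..\<tau> y}" for s using that tx by auto
  qed
  have "ennreal (ln (\<tau> y) - ln (\<tau> x)) = (\<integral>\<^sup>+t. ennreal (inverse (\<tau> t)) * indicator {x<..y} t \<partial>\<mu>)"
    using eq by simp
  also have "\<dots> \<le> (\<integral>\<^sup>+t. ennreal (w t) * indicator {x<..y} t \<partial>\<mu>)"
  proof (intro nn_integral_mono)
    fix t show "ennreal (inverse (\<tau> t)) * indicator {x<..y} t \<le> ennreal (w t) * indicator {x<..y} t"
    proof (cases "t \<in> {x<..y}")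
      case True
      hence tI: "t \<in> {a<..<b}" using assms by auto
      have "inverse (\<tau> t) \<le> inverse (FF t)"
        using tau_pos[OF tI] FF_pos[OF tI] by (intro le_imp_inverse_le) auto
      thus ?thesis using True tI by (simp add: w_def ennreal_leI)
    qed simp
  qed
  also have "\<dots> = emeasure m {x<..y}" by (simp add: em_m)
  also have "\<dots> = ennreal (\<Phi> y - \<Phi> x)" using assms by (rule em_Phi)
  finally have "ln (\<tau> y) - ln (\<tau> x) \<le> \<Phi> y - \<Phi> x"
    using Phi_mono[OF assms] by (subst (asm) ennreal_le_iff) auto
  hence "exp (\<Phi> x + ln (\<tau> y)) \<le> exp (\<Phi> y + ln (\<tau> x))" by simp
  thus ?thesis using tx by (simp add: exp_add)
qed

lemma rho1_Ioc_a:
  assumes y: "y \<in> {a<..<b}"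
  shows "emeasure \<rho>1 {a<..y} = ennreal (exp (\<Phi> y))"
proof -
  define x where "x n = a + (y - a) / real (n + 2)" for n :: nat
  have xr: "a < x n" "x n \<le> y" for n
  proof -
    have "(y - a) / real (n+2) \<le> (y - a) / 1" using y by (intro divide_left_mono) auto
    moreover have "0 < (y - a) / real (n+2)" using y by auto
    ultimately show "a < x n" "x n \<le> y" unfolding x_def by auto
  qed
  have xlim: "x \<longlonglongrightarrow> a"
  proof -
    have "(\<lambda>n. (y - a) / real n) \<longlonglongrightarrow> 0" by (rule lim_const_over_n)
    hence "(\<lambda>n. (y - a) / real (n + 2)) \<longlonglongrightarrow> 0" by (rule LIMSEQ_ignore_initial_segment)
    hence "(\<lambda>n. a + (y - a) / real (n + 2)) \<longlonglongrightarrow> a + 0" by (intro tendsto_intros)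
    thus ?thesis unfolding x_def by simp
  qed
  have inc: "incseq (\<lambda>n. {x n<..y})"
  proof (rule incseq_SucI)
    fix n have "x (Suc n) \<le> x n" unfolding x_def using y by (auto intro!: divide_left_mono)
    thus "{x n<..y} \<subseteq> {x (Suc n)<..y}" by auto
  qed
  have un: "(\<Union>n. {x n<..y}) = {a<..y}"
  proof (intro set_eqI iffI)
    fix t assume "t \<in> {a<..y}"
    hence t: "a < t" "t \<le> y" by auto
    have "eventually (\<lambda>n. x n < t) sequentially" using xlim t(1) by (rule order_tendstoD)
    then obtain n where "x n < t" unfolding eventually_sequentially by auto
    thus "t \<in> (\<Union>n. {x n<..y})" using t by auto
  qed (use xr in \<open>auto intro: less_trans\<close>)
  have L1: "(\<lambda>n. emeasure \<rho>1 {x n<..y}) \<longlonglongrightarrow> emeasure \<rho>1 {a<..y}"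
    using Lim_emeasure_incseq[of "\<lambda>n. {x n<..y}" \<rho>1] inc un by (auto simp: image_subset_iff)
  have tlim: "(\<lambda>n. \<tau> (x n)) \<longlonglongrightarrow> \<tau> a"
    using tau_cont[of UNIV] xlim by (simp add: continuous_on_eq_continuous_at isCont_tendsto_compose)
  hence "(\<lambda>n. exp (\<Phi> y) * \<tau> (x n) / \<tau> y) \<longlonglongrightarrow> exp (\<Phi> y) * \<tau> a / \<tau> y"
    by (intro tendsto_intros) (use tau_pos[OF y] in auto)
  hence bl: "(\<lambda>n. exp (\<Phi> y) * \<tau> (x n) / \<tau> y) \<longlonglongrightarrow> 0" by (simp add: \<tau>_def)
  have ty: "0 < \<tau> y" using tau_pos[OF y] by simp
  have e0: "(\<lambda>n. exp (\<Phi> (x n))) \<longlonglongrightarrow> 0"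
  proof (rule tendsto_sandwich[OF _ _ tendsto_const bl])
    show "eventually (\<lambda>n. 0 \<le> exp (\<Phi> (x n))) sequentially" by simp
    show "eventually (\<lambda>n. exp (\<Phi> (x n)) \<le> exp (\<Phi> y) * \<tau> (x n) / \<tau> y) sequentially"
      using tau_bound[OF xr(1) xr(2)] y ty by (auto simp: field_simps)
  qed
  have "(\<lambda>n. ennreal (exp (\<Phi> y) - exp (\<Phi> (x n)))) \<longlonglongrightarrow> ennreal (exp (\<Phi> y) - 0)"
    by (intro tendsto_ennrealI tendsto_intros e0)
  moreover have "emeasure \<rho>1 {x n<..y} = ennreal (exp (\<Phi> y) - exp (\<Phi> (x n)))" for n
    using rho1_Ioc[OF xr(1) xr(2)] y by auto
  ultimately have "(\<lambda>n. emeasure \<rho>1 {x n<..y}) \<longlonglongrightarrow> ennreal (exp (\<Phi> y))" by simp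
  thus ?thesis using L1 LIMSEQ_unique by blast
qed

lemma cdfmu_meas[measurable]: "cdf_of \<mu> \<in> borel_measurable borel"
  using mu(1) by (rule borel_measurable_continuous_onI)
lemma cdfnu_meas[measurable]: "cdf_of \<nu> \<in> borel_measurable borel"
  using nu(1) by (rule borel_measurable_continuous_onI)

lemma sf_mu: "sigma_finite_measure \<mu>" using p\<mu> by (rule prob_space_imp_sigma_finite)
lemma sf_nu: "sigma_finite_measure \<nu>" using p\<nu> by (rule prob_space_imp_sigma_finite)

lemma sf_m: "sigma_finite_measure m"
  unfolding m_def using sigma_finite_measure.sigma_finite_iff_density_finite[OF sf_mu, of "\<lambda>t. ennreal (w t)"]
  by simp

lemma sf_rho1: "sigma_finite_measure \<rho>1"
  unfolding \<rho>1_def using sigma_finite_measure.sigma_finite_iff_density_finite[OF sf_mu, of "\<lambda>t. ennreal (f1 t)"]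
  by (simp add: s\<mu> cong: measurable_cong_sets)

lemma sf_rho2: "sigma_finite_measure \<rho>2"
  unfolding \<rho>2_def using sigma_finite_measure.sigma_finite_iff_density_finite[OF sf_nu, of "\<lambda>t. ennreal (f2 t)"]
  by (simp add: s\<nu> cong: measurable_cong_sets)

lemma chain_E:
  assumes "a < t" "t \<le> y" "y < b"
  shows "(\<integral>\<^sup>+s. ennreal (f2 s) * indicator {t<..y} s \<partial>m) = ennreal (exp (- \<Phi> t) - exp (- \<Phi> y))"
proof -
  have "(\<integral>\<^sup>+s. ennreal (exp (- \<Phi> s)) * indicator {t<..y} s \<partial>m)
      = ennreal ((\<lambda>s. - exp (- s)) (\<Phi> y) - (\<lambda>s. - exp (- s)) (\<Phi> t))"
    using assms
    by (intro chain_FTC[where g="\<lambda>s. exp (- s)"])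
       (auto intro!: continuous_intros Phi_mono_on em_Phi derivative_eq_intros)
  also have "(\<integral>\<^sup>+s. ennreal (exp (- \<Phi> s)) * indicator {t<..y} s \<partial>m) = (\<integral>\<^sup>+s. ennreal (f2 s) * indicator {t<..y} s \<partial>m)"
    using assms by (intro nn_integral_cong) (auto simp: f2_def indicator_def)
  finally show ?thesis by simp
qed

lemma rep_E:
  assumes "a < x" "x \<le> t" "t \<le> y" "y < b"
  shows "ennreal (f2 t) = ennreal (f2 y) + (\<integral>\<^sup>+s. ennreal (f2 s) * indicator {t<..y} s \<partial>m)"
proof -
  have tI: "t \<in> {a<..<b}" "y \<in> {a<..<b}" using assms by auto
  have "exp (- \<Phi> y) \<le> exp (- \<Phi> t)" using Phi_mono[of t y] assms by auto
  thus ?thesis using chain_E[of t y] assms tI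
    by (simp add: f2_def ennreal_plus[symmetric] del: ennreal_plus)
qed

lemma tonelli_cdf:
  assumes "a < x" "x \<le> y" "y < b"
    and p: "prob_space \<sigma>" and s: "sets \<sigma> = sets borel" and at: "atomless \<sigma>"
  shows "(\<integral>\<^sup>+t. ennreal (f2 t) * indicator {x<..y} t \<partial>\<sigma>) =
     ennreal (f2 y * measure \<sigma> {x<..y}) +
     (\<integral>\<^sup>+s. ennreal (f2 s * indicator {x<..y} s * (cdf_of \<sigma> s - cdf_of \<sigma> x)) \<partial>m)"
proof -
  note sg = cdf_facts[OF p s at]
  have "(\<integral>\<^sup>+t. ennreal (f2 t) * indicator {x<..y} t \<partial>\<sigma>) =
     ennreal (f2 y) * emeasure \<sigma> {x<..y} +
     (\<integral>\<^sup>+s. ennreal (f2 s) * indicator {x<..y} s * emeasure \<sigma> {x<..<s} \<partial>m)"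
    by (rule tonelli_step[OF s sets_m prob_space_imp_sigma_finite[OF p] sf_m f2_meas])
       (use rep_E assms in auto)
  also have "ennreal (f2 y) * emeasure \<sigma> {x<..y} = ennreal (f2 y * measure \<sigma> {x<..y})"
    using sg(5) f2_nn by (simp add: ennreal_mult')
  also have "(\<integral>\<^sup>+s. ennreal (f2 s) * indicator {x<..y} s * emeasure \<sigma> {x<..<s} \<partial>m)
      = (\<integral>\<^sup>+s. ennreal (f2 s * indicator {x<..y} s * (cdf_of \<sigma> s - cdf_of \<sigma> x)) \<partial>m)"
  proof (rule nn_integral_cong)
    fix t
    show "ennreal (f2 t) * indicator {x<..y} t * emeasure \<sigma> {x<..<t} =
          ennreal (f2 t * indicator {x<..y} t * (cdf_of \<sigma> t - cdf_of \<sigma> x))"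
    proof (cases "t \<in> {x<..y}")
      case True
      hence "emeasure \<sigma> {x<..<t} = ennreal (cdf_of \<sigma> t - cdf_of \<sigma> x)" using sg(5) sg(3)[of x t] by auto
      moreover have "0 \<le> cdf_of \<sigma> t - cdf_of \<sigma> x" using sg(4)[of x t] True by auto
      ultimately show ?thesis using True f2_nn[of t] by (simp add: ennreal_mult')
    qed simp
  qed
  finally show ?thesis .
qed

lemma rho2_Ioc:
  assumes xy: "a < x" "x \<le> y" "y < b"
  shows "emeasure \<rho>2 {x<..y} = ennreal (FF x * exp (- \<Phi> x) - FF y * exp (- \<Phi> y))"
proof -
  define Ex where "Ex = exp (- \<Phi> x)"
  define Ey where "Ey = exp (- \<Phi> y)"
  have xI: "x \<in> {a<..<b}" and yI: "y \<in> {a<..<b}" using xy by auto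
  have f2x: "f2 x = Ex" "f2 y = Ey" using xI yI by (simp_all add: f2_def Ex_def Ey_def)
  have EyEx: "Ey \<le> Ex" using Phi_mono[OF xy] by (simp add: Ex_def Ey_def)
  have f2b: "f2 s \<le> Ex" if "s \<in> {x<..y}" for s
    using that Phi_mono[of x s] xy by (auto simp: f2_def Ex_def)
  define a1 where "a1 s = f2 s * indicator {x<..y} s * (cdf_of \<nu> s - cdf_of \<nu> x)" for s
  define a3 where "a3 s = f2 s * indicator {x<..y} s * (cdf_of \<mu> s - cdf_of \<mu> x)" for s
  define a2 where "a2 s = f2 s * FF s * indicator {x<..y} s" for s
  define a4 where "a4 s = f2 s * indicator {x<..y} s * FF x" for s
  have a_nn: "0 \<le> a1 s" "0 \<le> a2 s" "0 \<le> a3 s" "0 \<le> a4 s" for s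
    unfolding a1_def a2_def a3_def a4_def using f2_nn[of s] mu(4)[of x s] nu(4)[of x s] FF_pos[of s] FF_pos[OF xI] xy
    by (auto simp: indicator_def)
  have a_meas[measurable]: "a1 \<in> borel_measurable borel" "a2 \<in> borel_measurable borel"
     "a3 \<in> borel_measurable borel" "a4 \<in> borel_measurable borel"
    unfolding a1_def[abs_def] a2_def[abs_def] a3_def[abs_def] a4_def[abs_def] by measurable
  have a_eq: "a1 s + a2 s = a3 s + a4 s" for s
    unfolding a1_def a2_def a3_def a4_def FF_def by (simp add: algebra_simps)
  define I\<nu> where "I\<nu> = (\<integral>\<^sup>+t. ennreal (f2 t) * indicator {x<..y} t \<partial>\<nu>)"
  define I\<mu> where "I\<mu> = (\<integral>\<^sup>+t. ennreal (f2 t) * indicator {x<..y} t \<partial>\<mu>)"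
  define J\<nu> where "J\<nu> = (\<integral>\<^sup>+s. ennreal (a1 s) \<partial>m)"
  define J\<mu> where "J\<mu> = (\<integral>\<^sup>+s. ennreal (a3 s) \<partial>m)"
  have T\<nu>: "I\<nu> = ennreal (Ey * measure \<nu> {x<..y}) + J\<nu>"
    unfolding I\<nu>_def J\<nu>_def a1_def using tonelli_cdf[OF xy p\<nu> s\<nu> at\<nu>] f2x by simp
  have T\<mu>: "I\<mu> = ennreal (Ey * measure \<mu> {x<..y}) + J\<mu>"
    unfolding I\<mu>_def J\<mu>_def a3_def using tonelli_cdf[OF xy p\<mu> s\<mu> at\<mu>] f2x by simp
  have I\<mu>m: "I\<mu> = (\<integral>\<^sup>+s. ennreal (a2 s) \<partial>m)"
  proof -
    have "(\<integral>\<^sup>+s. ennreal (a2 s) \<partial>m) = (\<integral>\<^sup>+s. ennreal (w s) * ennreal (a2 s) \<partial>\<mu>)"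
      by (rule int_m) measurable
    also have "\<dots> = I\<mu>" unfolding I\<mu>_def
    proof (rule nn_integral_cong)
      fix s show "ennreal (w s) * ennreal (a2 s) = ennreal (f2 s) * indicator {x<..y} s"
      proof (cases "s \<in> {x<..y}")
        case True
        hence sI: "s \<in> {a<..<b}" using xy by auto
        have "w s * a2 s = f2 s" using True sI FF_pos[OF sI] by (simp add: w_def a2_def)
        thus ?thesis using True w_nn[of s] by (simp add: ennreal_mult'[symmetric])
      qed (simp add: a2_def)
    qed
    finally show ?thesis ..
  qed
  have K: "(\<integral>\<^sup>+s. ennreal (a4 s) \<partial>m) = ennreal (FF x * (Ex - Ey))"
  proof -
    have "(\<integral>\<^sup>+s. ennreal (a4 s) \<partial>m) = (\<integral>\<^sup>+s. ennreal (FF x) * (ennreal (f2 s) * indicator {x<..y} s) \<partial>m)"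
      using FF_pos[OF xI] f2_nn by (intro nn_integral_cong) (auto simp: a4_def ennreal_mult' ennreal_mult'' mult_ac indicator_def)
    also have "\<dots> = ennreal (FF x) * (\<integral>\<^sup>+s. ennreal (f2 s) * indicator {x<..y} s \<partial>m)"
      by (rule nn_integral_cmult) measurable
    also have "\<dots> = ennreal (FF x * (Ex - Ey))"
      using chain_E[OF xy] FF_pos[OF xI] by (simp add: Ex_def Ey_def ennreal_mult')
    finally show ?thesis .
  qed
  have Eq3: "J\<nu> + I\<mu> = J\<mu> + ennreal (FF x * (Ex - Ey))"
  proof -
    have "J\<nu> + I\<mu> = (\<integral>\<^sup>+s. ennreal (a1 s) + ennreal (a2 s) \<partial>m)"
      unfolding J\<nu>_def I\<mu>m by (subst nn_integral_add) auto
    also have "\<dots> = (\<integral>\<^sup>+s. ennreal (a3 s) + ennreal (a4 s) \<partial>m)"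
      using a_nn a_eq by (intro nn_integral_cong) (simp add: ennreal_plus[symmetric] del: ennreal_plus)
    also have "\<dots> = J\<mu> + ennreal (FF x * (Ex - Ey))"
      unfolding J\<mu>_def K[symmetric] by (subst nn_integral_add) auto
    finally show ?thesis .
  qed
  have fin\<nu>: "I\<nu> \<le> ennreal Ex"
  proof -
    have "I\<nu> \<le> (\<integral>\<^sup>+t. ennreal Ex * indicator {x<..y} t \<partial>\<nu>)"
      unfolding I\<nu>_def using f2b by (intro nn_integral_mono) (auto simp: indicator_def ennreal_leI)
    also have "\<dots> = ennreal Ex * emeasure \<nu> {x<..y}" using s\<nu> by (subst nn_integral_cmult_indicator) auto
    also have "\<dots> \<le> ennreal Ex * 1"
      using prob_space.emeasure_le_1[OF p\<nu>] by (intro mult_left_mono) auto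
    finally show ?thesis by simp
  qed
  have fin\<mu>: "I\<mu> \<le> ennreal Ex"
  proof -
    have "I\<mu> \<le> (\<integral>\<^sup>+t. ennreal Ex * indicator {x<..y} t \<partial>\<mu>)"
      unfolding I\<mu>_def using f2b by (intro nn_integral_mono) (auto simp: indicator_def ennreal_leI)
    also have "\<dots> = ennreal Ex * emeasure \<mu> {x<..y}" using s\<mu> by (subst nn_integral_cmult_indicator) auto
    also have "\<dots> \<le> ennreal Ex * 1"
      using prob_space.emeasure_le_1[OF p\<mu>] by (intro mult_left_mono) auto
    finally show ?thesis by simp
  qed
  obtain i\<nu> where i\<nu>: "0 \<le> i\<nu>" "I\<nu> = ennreal i\<nu>"
    using fin\<nu> by (cases I\<nu> rule: ennreal_cases) (auto simp: top_unique)
  obtain i\<mu> where i\<mu>: "0 \<le> i\<mu>" "I\<mu> = ennreal i\<mu>"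
    using fin\<mu> by (cases I\<mu> rule: ennreal_cases) (auto simp: top_unique)
  have "J\<nu> \<le> I\<nu>" using T\<nu> by simp
  then obtain j\<nu> where j\<nu>: "0 \<le> j\<nu>" "J\<nu> = ennreal j\<nu>"
    using i\<nu> by (cases J\<nu> rule: ennreal_cases) (auto simp: top_unique)
  have "J\<mu> \<le> I\<mu>" using T\<mu> by simp
  then obtain j\<mu> where j\<mu>: "0 \<le> j\<mu>" "J\<mu> = ennreal j\<mu>"
    using i\<mu> by (cases J\<mu> rule: ennreal_cases) (auto simp: top_unique)
  have Ey0: "0 \<le> Ey" by (simp add: Ey_def)
  have FFx0: "0 < FF x" using FF_pos[OF xI] .
  have r1: "i\<nu> = Ey * measure \<nu> {x<..y} + j\<nu>"
    using T\<nu> i\<nu> j\<nu> Ey0 by (simp add: ennreal_plus[symmetric] del: ennreal_plus)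
  have r2: "i\<mu> = Ey * measure \<mu> {x<..y} + j\<mu>"
    using T\<mu> i\<mu> j\<mu> Ey0 by (simp add: ennreal_plus[symmetric] del: ennreal_plus)
  have r3: "j\<nu> + i\<mu> = j\<mu> + FF x * (Ex - Ey)"
    using Eq3 i\<mu> j\<mu> j\<nu> FFx0 EyEx by (simp add: ennreal_plus[symmetric] del: ennreal_plus)
  have r4: "FF y - FF x = measure \<mu> {x<..y} - measure \<nu> {x<..y}" using FF_diff xy by simp
  have "FF y + measure \<nu> {x<..y} = FF x + measure \<mu> {x<..y}" using r4 by simp
  hence r5: "Ey * FF y + Ey * measure \<nu> {x<..y} = Ey * FF x + Ey * measure \<mu> {x<..y}"
    by (metis distrib_left)
  have "i\<nu> = FF x * Ex - FF y * Ey" using r1 r2 r3 r5 by (simp add: algebra_simps)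
  thus ?thesis using i\<nu> em_rho2[of "{x<..y}"] unfolding I\<nu>_def Ex_def Ey_def by simp
qed

lemma AE_rho1: "AE t in \<rho>1. t \<in> {a<..<b} \<and> t \<noteq> z"
proof -
  have "{z} \<in> null_sets \<mu>" using at\<mu> s\<mu> unfolding atomless_def by (auto simp: null_sets_def)
  hence "AE t in \<mu>. t \<notin> {z}" by (rule AE_not_in)
  hence "AE t in \<mu>. 0 < ennreal (f1 t) \<longrightarrow> t \<in> {a<..<b} \<and> t \<noteq> z"
    by (rule AE_mp) (auto intro!: AE_I2 simp: f1_def indicator_def)
  thus ?thesis unfolding \<rho>1_def by (subst AE_density) (auto simp: s\<mu> cong: measurable_cong_sets)
qed

lemma AE_rho2: "AE t in \<rho>2. t \<in> {a<..<b} \<and> t \<noteq> z"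
proof -
  have "{z} \<in> null_sets \<nu>" using at\<nu> s\<nu> unfolding atomless_def by (auto simp: null_sets_def)
  hence "AE t in \<nu>. t \<notin> {z}" by (rule AE_not_in)
  hence "AE t in \<nu>. 0 < ennreal (f2 t) \<longrightarrow> t \<in> {a<..<b} \<and> t \<noteq> z"
    by (rule AE_mp) (auto intro!: AE_I2 simp: f2_def indicator_def)
  thus ?thesis unfolding \<rho>2_def by (subst AE_density) (auto simp: s\<nu> cong: measurable_cong_sets)
qed

lemma rho1_out: "emeasure \<rho>1 (UNIV - {a<..<b}) = 0"
proof -
  have "emeasure \<rho>1 (UNIV - {a<..<b}) = emeasure \<rho>1 {}"
    using AE_rho1[of 0] by (intro emeasure_eq_AE) (auto elim: AE_mp)
  thus ?thesis by simp
qed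

lemma rho2_out: "emeasure \<rho>2 (UNIV - {a<..<b}) = 0"
proof -
  have "emeasure \<rho>2 (UNIV - {a<..<b}) = emeasure \<rho>2 {}"
    using AE_rho2[of 0] by (intro emeasure_eq_AE) (auto elim: AE_mp)
  thus ?thesis by simp
qed

lemma rho1_lt: "y \<in> {a<..<b} \<Longrightarrow> emeasure \<rho>1 {..<y} = ennreal (exp (\<Phi> y))"
proof -
  assume y: "y \<in> {a<..<b}"
  have "emeasure \<rho>1 {..<y} = emeasure \<rho>1 {a<..y}"
    using AE_rho1[of y] by (intro emeasure_eq_AE) (auto elim!: AE_mp)
  thus ?thesis using rho1_Ioc_a[OF y] by simp
qed

lemma rho2_Ico_b:
  assumes x: "x \<in> {a<..<b}"
  shows "emeasure \<rho>2 {x..<b} = ennreal (FF x * exp (- \<Phi> x))"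
    and "emeasure \<rho>2 {x<..} = ennreal (FF x * exp (- \<Phi> x))"
proof -
  define y where "y n = b - (b - x) / real (n + 2)" for n :: nat
  have yr: "x \<le> y n" "y n < b" for n
  proof -
    have "(b - x) / real (n+2) \<le> (b - x) / 1" using x by (intro divide_left_mono) auto
    moreover have "0 < (b - x) / real (n+2)" using x by auto
    ultimately show "x \<le> y n" "y n < b" unfolding y_def by auto
  qed
  have ylim: "y \<longlonglongrightarrow> b"
  proof -
    have "(\<lambda>n. (b - x) / real n) \<longlonglongrightarrow> 0" by (rule lim_const_over_n)
    hence "(\<lambda>n. (b - x) / real (n + 2)) \<longlonglongrightarrow> 0" by (rule LIMSEQ_ignore_initial_segment)
    hence "(\<lambda>n. b - (b - x) / real (n + 2)) \<longlonglongrightarrow> b - 0" by (intro tendsto_intros)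
    thus ?thesis unfolding y_def by simp
  qed
  have inc: "incseq (\<lambda>n. {x<..y n})"
  proof (rule incseq_SucI)
    fix n have "y n \<le> y (Suc n)" unfolding y_def using x by (auto intro!: divide_left_mono)
    thus "{x<..y n} \<subseteq> {x<..y (Suc n)}" by auto
  qed
  have un: "(\<Union>n. {x<..y n}) = {x<..<b}"
  proof (intro set_eqI iffI)
    fix t assume "t \<in> {x<..<b}"
    hence t: "x < t" "t < b" by auto
    have "eventually (\<lambda>n. t < y n) sequentially" using ylim t(2) by (rule order_tendstoD)
    then obtain n where "t < y n" unfolding eventually_sequentially by auto
    thus "t \<in> (\<Union>n. {x<..y n})" using t by (auto intro: less_imp_le)
  qed (use yr in \<open>auto intro: le_less_trans\<close>)
  have L1: "(\<lambda>n. emeasure \<rho>2 {x<..y n}) \<longlonglongrightarrow> emeasure \<rho>2 {x<..<b}"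
    using Lim_emeasure_incseq[of "\<lambda>n. {x<..y n}" \<rho>2] inc un by (auto simp: image_subset_iff)
  define Ex where "Ex = exp (- \<Phi> x)"
  have FFlim: "(\<lambda>n. FF (y n) * Ex) \<longlonglongrightarrow> FF b * Ex"
    using FF_cont ylim by (intro tendsto_intros) (simp add: continuous_on_eq_continuous_at isCont_tendsto_compose)
  have z: "(\<lambda>n. FF (y n) * exp (- \<Phi> (y n))) \<longlonglongrightarrow> 0"
  proof (rule tendsto_sandwich[OF _ _ tendsto_const])
    show "(\<lambda>n. FF (y n) * Ex) \<longlonglongrightarrow> 0" using FFlim FF_b by simp
    show "eventually (\<lambda>n. 0 \<le> FF (y n) * exp (- \<Phi> (y n))) sequentially"
    proof (intro always_eventually allI)
      fix n
      have "y n \<in> {a<..<b}" using yr[of n] x by auto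
      hence "0 < FF (y n)" by (rule FF_pos)
      thus "0 \<le> FF (y n) * exp (- \<Phi> (y n))" by simp
    qed
    show "eventually (\<lambda>n. FF (y n) * exp (- \<Phi> (y n)) \<le> FF (y n) * Ex) sequentially"
    proof (intro always_eventually allI)
      fix n
      have "y n \<in> {a<..<b}" using yr[of n] x by auto
      hence "0 < FF (y n)" by (rule FF_pos)
      moreover have "exp (- \<Phi> (y n)) \<le> Ex" using Phi_mono[of x "y n"] yr[of n] x by (auto simp: Ex_def)
      ultimately show "FF (y n) * exp (- \<Phi> (y n)) \<le> FF (y n) * Ex" by simp
    qed
  qed
  have "(\<lambda>n. ennreal (FF x * Ex - FF (y n) * exp (- \<Phi> (y n)))) \<longlonglongrightarrow> ennreal (FF x * Ex - 0)"
    by (intro tendsto_ennrealI tendsto_intros z)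
  moreover have "emeasure \<rho>2 {x<..y n} = ennreal (FF x * Ex - FF (y n) * exp (- \<Phi> (y n)))" for n
    using rho2_Ioc[of x "y n"] yr[of n] x by (auto simp: Ex_def)
  ultimately have "(\<lambda>n. emeasure \<rho>2 {x<..y n}) \<longlonglongrightarrow> ennreal (FF x * Ex)" by simp
  hence oo: "emeasure \<rho>2 {x<..<b} = ennreal (FF x * Ex)" using L1 LIMSEQ_unique by blast
  have "emeasure \<rho>2 {x..<b} = emeasure \<rho>2 {x<..<b}"
    using AE_rho2[of x] by (intro emeasure_eq_AE) (auto elim!: AE_mp)
  thus "emeasure \<rho>2 {x..<b} = ennreal (FF x * exp (- \<Phi> x))" using oo by (simp add: Ex_def)
  have "emeasure \<rho>2 {x<..} = emeasure \<rho>2 {x<..<b}"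
    using AE_rho2[of x] by (intro emeasure_eq_AE) (auto elim!: AE_mp)
  thus "emeasure \<rho>2 {x<..} = ennreal (FF x * exp (- \<Phi> x))" using oo by (simp add: Ex_def)
qed

lemma G_meas[measurable]: "(\<lambda>x. emeasure \<rho>2 {x..<b}) \<in> borel_measurable borel"
proof -
  have "(\<lambda>x. \<integral>\<^sup>+y. indicator {p::real\<times>real. fst p \<le> snd p \<and> snd p < b} (x, y) \<partial>\<rho>2) \<in> borel_measurable borel"
    by (rule sigma_finite_measure.borel_measurable_nn_integral[OF sf_rho2]) measurable
  moreover have "(\<integral>\<^sup>+y. indicator {p::real\<times>real. fst p \<le> snd p \<and> snd p < b} (x, y) \<partial>\<rho>2) = emeasure \<rho>2 {x..<b}" for x
  proof -
    have "(\<integral>\<^sup>+y. indicator {p::real\<times>real. fst p \<le> snd p \<and> snd p < b} (x, y) \<partial>\<rho>2) = (\<integral>\<^sup>+y. indicator {x..<b} y \<partial>\<rho>2)"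
      by (intro nn_integral_cong) (auto simp: indicator_def)
    thus ?thesis by simp
  qed
  ultimately show ?thesis by simp
qed

lemma F_meas[measurable]: "(\<lambda>y. emeasure \<rho>1 {a<..y}) \<in> borel_measurable borel"
proof -
  have "(\<lambda>y. \<integral>\<^sup>+x. indicator {p::real\<times>real. a < snd p \<and> snd p \<le> fst p} (y, x) \<partial>\<rho>1) \<in> borel_measurable borel"
    by (rule sigma_finite_measure.borel_measurable_nn_integral[OF sf_rho1]) measurable
  moreover have "(\<integral>\<^sup>+x. indicator {p::real\<times>real. a < snd p \<and> snd p \<le> fst p} (y, x) \<partial>\<rho>1) = emeasure \<rho>1 {a<..y}" for y
  proof -
    have "(\<integral>\<^sup>+x. indicator {p::real\<times>real. a < snd p \<and> snd p \<le> fst p} (y, x) \<partial>\<rho>1) = (\<integral>\<^sup>+x. indicator {a<..y} x \<partial>\<rho>1)"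
      by (intro nn_integral_cong) (auto simp: indicator_def)
    thus ?thesis by simp
  qed
  ultimately show ?thesis by simp
qed

lemma DE1: "density \<rho>1 (\<lambda>x. emeasure \<rho>2 {x..<b} * indicator {a<..<b} x) = density \<mu> (indicator {a<..<b})"
proof -
  have "density \<rho>1 (\<lambda>x. emeasure \<rho>2 {x..<b} * indicator {a<..<b} x)
      = density \<mu> (\<lambda>x. ennreal (f1 x) * (emeasure \<rho>2 {x..<b} * indicator {a<..<b} x))"
    unfolding \<rho>1_def by (rule density_density_eq) (auto simp: s\<mu> cong: measurable_cong_sets)
  also have "(\<lambda>x. ennreal (f1 x) * (emeasure \<rho>2 {x..<b} * indicator {a<..<b} x)) = indicator {a<..<b}"
  proof
    fix x show "ennreal (f1 x) * (emeasure \<rho>2 {x..<b} * indicator {a<..<b} x) = indicator {a<..<b} x"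
    proof (cases "x \<in> {a<..<b}")
      case True
      have "f1 x * (FF x * exp (- \<Phi> x)) = 1"
        using True FF_pos[OF True] by (simp add: f1_def field_simps exp_minus)
      thus ?thesis using True rho2_Ico_b(1)[OF True] FF_pos[OF True] f1_nn[of x]
        by (simp add: ennreal_mult'[symmetric])
    qed simp
  qed
  finally show ?thesis .
qed

lemma DE2: "density \<rho>2 (\<lambda>y. emeasure \<rho>1 {a<..y} * indicator {a<..<b} y) = density \<nu> (indicator {a<..<b})"
proof -
  have "density \<rho>2 (\<lambda>y. emeasure \<rho>1 {a<..y} * indicator {a<..<b} y)
      = density \<nu> (\<lambda>y. ennreal (f2 y) * (emeasure \<rho>1 {a<..y} * indicator {a<..<b} y))"
    unfolding \<rho>2_def by (rule density_density_eq) (auto simp: s\<nu> cong: measurable_cong_sets)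
  also have "(\<lambda>y. ennreal (f2 y) * (emeasure \<rho>1 {a<..y} * indicator {a<..<b} y)) = indicator {a<..<b}"
  proof
    fix y show "ennreal (f2 y) * (emeasure \<rho>1 {a<..y} * indicator {a<..<b} y) = indicator {a<..<b} y"
    proof (cases "y \<in> {a<..<b}")
      case True
      have "f2 y * exp (\<Phi> y) = 1"
        using True by (simp add: f2_def exp_minus)
      thus ?thesis using True rho1_Ioc_a[OF True] f2_nn[of y]
        by (simp add: ennreal_mult'[symmetric])
    qed simp
  qed
  finally show ?thesis .
qed

lemma restr_eq1: "restr (density \<rho>1 (\<lambda>x. emeasure \<rho>2 {x..<b})) {a<..<b} = restr \<mu> {a<..<b}"
  unfolding restr_def using DE1 by (subst density_density_eq) auto

lemma restr_eq2: "restr (density \<rho>2 (\<lambda>y. emeasure \<rho>1 {a<..y})) {a<..<b} = restr \<nu> {a<..<b}"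
  unfolding restr_def using DE2 by (subst density_density_eq) auto

lemma marg1:
  assumes A: "A \<in> sets borel"
  shows "(\<integral>\<^sup>+x. indicator A x * emeasure \<rho>2 {x<..} \<partial>\<rho>1) = emeasure (restr \<mu> {a<..<b}) A"
proof -
  have "(\<integral>\<^sup>+x. indicator A x * emeasure \<rho>2 {x<..} \<partial>\<rho>1)
     = (\<integral>\<^sup>+x. (emeasure \<rho>2 {x..<b} * indicator {a<..<b} x) * indicator A x \<partial>\<rho>1)"
    by (rule nn_integral_cong_AE, rule AE_mp[OF AE_rho1[of 0]])
       (auto intro!: AE_I2 simp: rho2_Ico_b mult.commute)
  also have "\<dots> = emeasure (density \<rho>1 (\<lambda>x. emeasure \<rho>2 {x..<b} * indicator {a<..<b} x)) A"
    using A by (subst emeasure_density) auto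
  also have "\<dots> = emeasure (restr \<mu> {a<..<b}) A" unfolding DE1 restr_def ..
  finally show ?thesis .
qed

lemma marg2:
  assumes B: "B \<in> sets borel"
  shows "(\<integral>\<^sup>+y. indicator B y * emeasure \<rho>1 {..<y} \<partial>\<rho>2) = emeasure (restr \<nu> {a<..<b}) B"
proof -
  have "(\<integral>\<^sup>+y. indicator B y * emeasure \<rho>1 {..<y} \<partial>\<rho>2)
     = (\<integral>\<^sup>+y. (emeasure \<rho>1 {a<..y} * indicator {a<..<b} y) * indicator B y \<partial>\<rho>2)"
    by (rule nn_integral_cong_AE, rule AE_mp[OF AE_rho2[of 0]])
       (auto intro!: AE_I2 simp: rho1_lt rho1_Ioc_a mult.commute)
  also have "\<dots> = emeasure (density \<rho>2 (\<lambda>y. emeasure \<rho>1 {a<..y} * indicator {a<..<b} y)) B"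
    using B by (subst emeasure_density) auto
  also have "\<dots> = emeasure (restr \<nu> {a<..<b}) B" unfolding DE2 restr_def ..
  finally show ?thesis .
qed

lemma M1eq: "y \<in> {a<..<b} \<Longrightarrow> measure \<rho>1 {a<..y} = exp (\<Phi> y)"
  using rho1_Ioc_a by (simp add: measure_def)
lemma M2eq: "x \<in> {a<..<b} \<Longrightarrow> measure \<rho>2 {x..<b} = FF x * exp (- \<Phi> x)"
  using rho2_Ico_b(1) FF_pos by (simp add: measure_def less_imp_le)
lemma cont1: "continuous_on {a<..<b} (\<lambda>y. measure \<rho>1 {a<..y})"
  by (rule continuous_on_cong[THEN iffD2, OF refl M1eq]) (auto intro!: continuous_intros)
lemma cont2: "continuous_on {a<..<b} (\<lambda>x. measure \<rho>2 {x..<b})"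
  by (rule continuous_on_cong[THEN iffD2, OF refl M2eq]) (auto intro!: continuous_intros)
lemma pos1: "\<forall>y\<in>{a<..<b}. measure \<rho>1 {a<..y} > 0" using M1eq by simp
lemma pos2: "\<forall>x\<in>{a<..<b}. measure \<rho>2 {x..<b} > 0" using M2eq FF_pos by simp
lemma fin1: "\<forall>y\<in>{a<..<b}. emeasure \<rho>1 {a<..y} < \<infinity>" using rho1_Ioc_a by simp
lemma fin2: "\<forall>x\<in>{a<..<b}. emeasure \<rho>2 {x..<b} < \<infinity>" using rho2_Ico_b(1) by simp

end

lemma P_sets: "{p::real\<times>real. fst p < snd p} \<in> sets (borel \<Otimes>\<^sub>M borel)"
  "{p::real\<times>real. snd p < fst p} \<in> sets (borel \<Otimes>\<^sub>M borel)"
proof -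
  have "Measurable.pred (borel \<Otimes>\<^sub>M borel) (\<lambda>p::real\<times>real. fst p < snd p)" by measurable
  thus "{p::real\<times>real. fst p < snd p} \<in> sets (borel \<Otimes>\<^sub>M borel)"
    by (simp add: Measurable.pred_def space_pair_measure)
  have "Measurable.pred (borel \<Otimes>\<^sub>M borel) (\<lambda>p::real\<times>real. snd p < fst p)" by measurable
  thus "{p::real\<times>real. snd p < fst p} \<in> sets (borel \<Otimes>\<^sub>M borel)"
    by (simp add: Measurable.pred_def space_pair_measure)
qed




theorem mainTheorem10:
  fixes \<mu> \<nu> :: "real measure" and a b :: real
  assumes "prob_space \<mu>" "prob_space \<nu>"
    and "sets \<mu> = sets borel" "sets \<nu> = sets borel"
    and "atomless \<mu>" "atomless \<nu>"
    and "compactly_supported \<mu>" "compactly_supported \<nu>"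
    and "a < b"
  shows
   "(cdf_of \<mu> a - cdf_of \<nu> a = 0 \<and> cdf_of \<mu> b - cdf_of \<nu> b = 0 \<and>
     (\<forall>x\<in>{a<..<b}. cdf_of \<mu> x - cdf_of \<nu> x > 0)
     \<longrightarrow> (\<exists>\<rho>1 \<rho>2 :: real measure.
          sets \<rho>1 = sets borel \<and> sets \<rho>2 = sets borel \<and>
          emeasure \<rho>1 (UNIV - {a<..<b}) = 0 \<and> emeasure \<rho>2 (UNIV - {a<..<b}) = 0 \<and>
          (\<forall>y\<in>{a<..<b}. emeasure \<rho>1 {a<..y} < \<infinity>) \<and>
          (\<forall>x\<in>{a<..<b}. emeasure \<rho>2 {x..<b} < \<infinity>) \<and>
          restr (density \<rho>1 (\<lambda>x. emeasure \<rho>2 {x..<b})) {a<..<b} = restr \<mu> {a<..<b} \<and>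
          restr (density \<rho>2 (\<lambda>y. emeasure \<rho>1 {a<..y})) {a<..<b} = restr \<nu> {a<..<b} \<and>
          continuous_on {a<..<b} (\<lambda>y. measure \<rho>1 {a<..y}) \<and>
          continuous_on {a<..<b} (\<lambda>x. measure \<rho>2 {x..<b}) \<and>
          (\<forall>y\<in>{a<..<b}. measure \<rho>1 {a<..y} > 0) \<and>
          (\<forall>x\<in>{a<..<b}. measure \<rho>2 {x..<b} > 0) \<and>
          restr (\<rho>1 \<Otimes>\<^sub>M \<rho>2) {p. snd p > fst p}
            \<in> couplings (restr \<mu> {a<..<b}) (restr \<nu> {a<..<b})))
   \<and>
   (cdf_of \<mu> a - cdf_of \<nu> a = 0 \<and> cdf_of \<mu> b - cdf_of \<nu> b = 0 \<and>
     (\<forall>x\<in>{a<..<b}. cdf_of \<mu> x - cdf_of \<nu> x < 0)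
     \<longrightarrow> (\<exists>\<rho>1 \<rho>2 :: real measure.
          sets \<rho>1 = sets borel \<and> sets \<rho>2 = sets borel \<and>
          emeasure \<rho>1 (UNIV - {a<..<b}) = 0 \<and> emeasure \<rho>2 (UNIV - {a<..<b}) = 0 \<and>
          (\<forall>y\<in>{a<..<b}. emeasure \<rho>1 {y..<b} < \<infinity>) \<and>
          (\<forall>x\<in>{a<..<b}. emeasure \<rho>2 {a<..x} < \<infinity>) \<and>
          restr (density \<rho>1 (\<lambda>x. emeasure \<rho>2 {a<..x})) {a<..<b} = restr \<mu> {a<..<b} \<and>
          restr (density \<rho>2 (\<lambda>y. emeasure \<rho>1 {y..<b})) {a<..<b} = restr \<nu> {a<..<b} \<and>
          continuous_on {a<..<b} (\<lambda>y. measure \<rho>1 {y..<b}) \<and>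
          continuous_on {a<..<b} (\<lambda>x. measure \<rho>2 {a<..x}) \<and>
          (\<forall>y\<in>{a<..<b}. measure \<rho>1 {y..<b} > 0) \<and>
          (\<forall>x\<in>{a<..<b}. measure \<rho>2 {a<..x} > 0) \<and>
          restr (\<rho>1 \<Otimes>\<^sub>M \<rho>2) {p. snd p < fst p}
            \<in> couplings (restr \<mu> {a<..<b}) (restr \<nu> {a<..<b})))"
proof (intro conjI impI)
  assume h: "cdf_of \<mu> a - cdf_of \<nu> a = 0 \<and> cdf_of \<mu> b - cdf_of \<nu> b = 0 \<and>
     (\<forall>x\<in>{a<..<b}. cdf_of \<mu> x - cdf_of \<nu> x > 0)"
  interpret C: core \<mu> \<nu> a b
    by (rule core.intro[OF assms(1-6) assms(9) h[THEN conjunct1] h[THEN conjunct2, THEN conjunct1]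
          h[THEN conjunct2, THEN conjunct2]])
  have e1: "{y. (x, y) \<in> {p::real\<times>real. fst p < snd p}} = {x<..}" for x by auto
  have e2: "{x. (x, y) \<in> {p::real\<times>real. fst p < snd p}} = {..<y}" for y by auto
  have cp: "restr (C.\<rho>1 \<Otimes>\<^sub>M C.\<rho>2) {p. snd p > fst p} \<in> couplings (restr \<mu> {a<..<b}) (restr \<nu> {a<..<b})"
    by (rule coupling_marginals[OF C.sets_rho C.sf_rho1 C.sf_rho2 P_sets(1)])
       (simp_all only: e1 e2 C.marg1 C.marg2)
  show "\<exists>\<rho>1 \<rho>2 :: real measure.
          sets \<rho>1 = sets borel \<and> sets \<rho>2 = sets borel \<and>
          emeasure \<rho>1 (UNIV - {a<..<b}) = 0 \<and> emeasure \<rho>2 (UNIV - {a<..<b}) = 0 \<and>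
          (\<forall>y\<in>{a<..<b}. emeasure \<rho>1 {a<..y} < \<infinity>) \<and>
          (\<forall>x\<in>{a<..<b}. emeasure \<rho>2 {x..<b} < \<infinity>) \<and>
          restr (density \<rho>1 (\<lambda>x. emeasure \<rho>2 {x..<b})) {a<..<b} = restr \<mu> {a<..<b} \<and>
          restr (density \<rho>2 (\<lambda>y. emeasure \<rho>1 {a<..y})) {a<..<b} = restr \<nu> {a<..<b} \<and>
          continuous_on {a<..<b} (\<lambda>y. measure \<rho>1 {a<..y}) \<and>
          continuous_on {a<..<b} (\<lambda>x. measure \<rho>2 {x..<b}) \<and>
          (\<forall>y\<in>{a<..<b}. measure \<rho>1 {a<..y} > 0) \<and>
          (\<forall>x\<in>{a<..<b}. measure \<rho>2 {x..<b} > 0) \<and>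
          restr (\<rho>1 \<Otimes>\<^sub>M \<rho>2) {p. snd p > fst p}
            \<in> couplings (restr \<mu> {a<..<b}) (restr \<nu> {a<..<b})"
    by (rule exI[of _ C.\<rho>1], rule exI[of _ C.\<rho>2], intro conjI C.sets_rho C.rho1_out C.rho2_out C.fin1 C.fin2
        C.restr_eq1 C.restr_eq2 C.cont1 C.cont2 C.pos1 C.pos2 cp)
next
  assume h: "cdf_of \<mu> a - cdf_of \<nu> a = 0 \<and> cdf_of \<mu> b - cdf_of \<nu> b = 0 \<and>
     (\<forall>x\<in>{a<..<b}. cdf_of \<mu> x - cdf_of \<nu> x < 0)"
  have h1: "cdf_of \<nu> a - cdf_of \<mu> a = 0" "cdf_of \<nu> b - cdf_of \<mu> b = 0" using h by simp_all
  have h2: "\<forall>x\<in>{a<..<b}. cdf_of \<nu> x - cdf_of \<mu> x > 0" using h by simp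
  interpret C: core \<nu> \<mu> a b
    by (rule core.intro[OF assms(2) assms(1) assms(4) assms(3) assms(6) assms(5) assms(9) h1 h2])
  have e1: "{y. (x, y) \<in> {p::real\<times>real. snd p < fst p}} = {..<x}" for x by auto
  have e2: "{x. (x, y) \<in> {p::real\<times>real. snd p < fst p}} = {y<..}" for y by auto
  have cp: "restr (C.\<rho>2 \<Otimes>\<^sub>M C.\<rho>1) {p. snd p < fst p} \<in> couplings (restr \<mu> {a<..<b}) (restr \<nu> {a<..<b})"
    by (rule coupling_marginals[OF C.sets_rho(2) C.sets_rho(1) C.sf_rho2 C.sf_rho1 P_sets(2)])
       (simp_all only: e1 e2 C.marg1 C.marg2)
  show "\<exists>\<rho>1 \<rho>2 :: real measure.
          sets \<rho>1 = sets borel \<and> sets \<rho>2 = sets borel \<and>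
          emeasure \<rho>1 (UNIV - {a<..<b}) = 0 \<and> emeasure \<rho>2 (UNIV - {a<..<b}) = 0 \<and>
          (\<forall>y\<in>{a<..<b}. emeasure \<rho>1 {y..<b} < \<infinity>) \<and>
          (\<forall>x\<in>{a<..<b}. emeasure \<rho>2 {a<..x} < \<infinity>) \<and>
          restr (density \<rho>1 (\<lambda>x. emeasure \<rho>2 {a<..x})) {a<..<b} = restr \<mu> {a<..<b} \<and>
          restr (density \<rho>2 (\<lambda>y. emeasure \<rho>1 {y..<b})) {a<..<b} = restr \<nu> {a<..<b} \<and>
          continuous_on {a<..<b} (\<lambda>y. measure \<rho>1 {y..<b}) \<and>
          continuous_on {a<..<b} (\<lambda>x. measure \<rho>2 {a<..x}) \<and>
          (\<forall>y\<in>{a<..<b}. measure \<rho>1 {y..<b} > 0) \<and>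
          (\<forall>x\<in>{a<..<b}. measure \<rho>2 {a<..x} > 0) \<and>
          restr (\<rho>1 \<Otimes>\<^sub>M \<rho>2) {p. snd p < fst p}
            \<in> couplings (restr \<mu> {a<..<b}) (restr \<nu> {a<..<b})"
    by (rule exI[of _ C.\<rho>2], rule exI[of _ C.\<rho>1], intro conjI C.sets_rho C.rho1_out C.rho2_out C.fin1 C.fin2
        C.restr_eq1 C.restr_eq2 C.cont1 C.cont2 C.pos1 C.pos2 cp)
qed


end
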